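(* Let $F$ be a face of $\Delta$, let $\mathfrak r$ be the orthogonal complement of $\mathfrak n\cap\mathbb R^{I_F}$ in $\mathfrak n$, and let $z\in(\mathbb C^* )^{F^c}$. Then there exist a unique point $x\in\Psi_\Delta^{-1}(0)$, a unique point $\xi\in F$ and a unique $Y\in\mathfrak r$ such that $Az\cap\Psi_\Delta^{-1}(0)=\{x\}$, $\exp(iY)z=x$, and $\langle\xi,X_j\rangle-\lambda_j=|x_j|^2$ for $j=1,\dots,d$.
   Context: Let $\mathfrak d$ be an $n$-dimensional real vector space. Let $\Delta\subset\mathfrak d^*$ be an $n$-dimensional convex polytope with $d$ facets, $\Delta=\bigcap_{j=1}^d\{\mu\in\mathfrak d^*:\langle\mu,X_j\rangle\ge\lambda_j\}$, with chosen inward normals $X_1,\dots,X_d\in\mathfrak d$ and $\lambda_j\in\mathbb R$. For each face $F$, $I_F$ is such that $F=\{\mu\in\Delta:\langle\mu,X_j\rangle=\lambda_j\iff j\in I_F\}$. $(\mathbb C^* )^{F^c}=\{z\in\mathbb C^d:z_j=0\ (j\in I_F),\ z_j\ne0\ (j\notin I_F)\}$; $\mathbb R^{I_F}\subseteq\mathbb R^d$ is the coordinate subspace spanned by $e_j$, $j\in I_F$. $\pi:\mathbb R^d\to\mathfrak d$, $e_j\mapsto X_j$; $\mathfrak n=\ker\pi$ with the inner product induced from the standard one on $\mathbb R^d$; $\iota:\mathfrak n\to\mathbb R^d$ the inclusion. $A=\{\exp(iY):Y\in\mathfrak n\}$ acts on $\mathbb C^d$ by $z_j\mapsto e^{-2\pi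 Y_j}z_j$. $\Psi_\Delta:\mathbb C^d\to\mathfrak n^*$, $\Psi_\Delta(z)=\sum_{j=1}^d(|z_j|^2+\lambda_j)\iota^*(e_j^* )$. *)

theory Defs
  imports "HOL-Analysis.Analysis"
begin

text \<open>Conventions: the n-dimensional space d is real^'n, its dual is identified with
real^'n via the dot product; facets are indexed by the finite type 'd (so d = CARD('d)).\<close>

definition Delta :: "('d::finite \<Rightarrow> real^'n::finite) \<Rightarrow> ('d \<Rightarrow> real) \<Rightarrow> (real^'n) set" where
  "Delta X lam = {\<mu>. \<forall>j. \<mu> \<bullet> X j \<ge> lam j}"

definition facetj :: "('d::finite \<Rightarrow> real^'n::finite) \<Rightarrow> ('d \<Rightarrow> real) \<Rightarrow> 'd \<Rightarrow> (real^'n) set" where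
  "facetj X lam j = {\<mu> \<in> Delta X lam. \<mu> \<bullet> X j = lam j}"

definition faceI :: "('d::finite \<Rightarrow> real^'n::finite) \<Rightarrow> ('d \<Rightarrow> real) \<Rightarrow> 'd set \<Rightarrow> (real^'n) set" where
  "faceI X lam I = {\<mu> \<in> Delta X lam. \<forall>j. \<mu> \<bullet> X j = lam j \<longleftrightarrow> j \<in> I}"

definition piX :: "('d::finite \<Rightarrow> real^'n::finite) \<Rightarrow> real^'d \<Rightarrow> real^'n" where
  "piX X t = (\<Sum>j\<in>UNIV. (t $ j) *\<^sub>R X j)"

definition nker :: "('d::finite \<Rightarrow> real^'n::finite) \<Rightarrow> (real^'d) set" where
  "nker X = {t. piX X t = 0}"

definition coord_sub :: "'d::finite set \<Rightarrow> (real^'d) set" where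
  "coord_sub I = {t. \<forall>j. j \<notin> I \<longrightarrow> t $ j = 0}"

definition rperp :: "('d::finite \<Rightarrow> real^'n::finite) \<Rightarrow> 'd set \<Rightarrow> (real^'d) set" where
  "rperp X I = {Y \<in> nker X. \<forall>W \<in> nker X \<inter> coord_sub I. Y \<bullet> W = 0}"

text \<open>Action of exp(iY) on C^d.\<close>
definition Aact :: "real^'d::finite \<Rightarrow> complex^'d \<Rightarrow> complex^'d" where
  "Aact Y z = (\<chi> j. complex_of_real (exp (- 2 * pi * (Y $ j))) * (z $ j))"

definition Aorbit :: "('d::finite \<Rightarrow> real^'n::finite) \<Rightarrow> complex^'d \<Rightarrow> (complex^'d) set" where
  "Aorbit X z = {Aact Y z | Y. Y \<in> nker X}"

text \<open>Psi_Delta(z), as a linear functional evaluated on Y in n: sum_j (|z_j|^2+lam_j) Y_j.\<close>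
definition Psi :: "('d::finite \<Rightarrow> real) \<Rightarrow> complex^'d \<Rightarrow> real^'d \<Rightarrow> real" where
  "Psi lam z Y = (\<Sum>j\<in>UNIV. ((cmod (z $ j))\<^sup>2 + lam j) * (Y $ j))"

definition Psi_zero :: "('d::finite \<Rightarrow> real^'n::finite) \<Rightarrow> ('d \<Rightarrow> real) \<Rightarrow> (complex^'d) set" where
  "Psi_zero X lam = {z. \<forall>Y \<in> nker X. Psi lam z Y = 0}"

definition Cstar_Fc :: "'d::finite set \<Rightarrow> (complex^'d) set" where
  "Cstar_Fc I = {z. \<forall>j. z $ j = 0 \<longleftrightarrow> j \<in> I}"

end

theory Submission
  imports Defs
begin


lemma exp_quad: "u \<ge> 0 \<Longrightarrow> 1 + u + u^2/4 \<le> exp (u::real)"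
proof -
  assume u: "u \<ge> 0"
  have "1 + u/2 \<le> exp (u/2)" by simp
  hence "(1 + u/2)^2 \<le> exp (u/2) ^ 2" using u by (intro power_mono) auto
  also have "\<dots> = exp u" by (simp add: exp_double[symmetric])
  finally show ?thesis by (simp add: power2_eq_square field_simps)
qed

lemma scal_lower:
  fixes a b c :: real assumes "a > 0" "b > 0" "c > 0"
  shows "a * exp (- c * y) + b * y \<ge> - ((b/c)^2 / a)"
proof (cases "y \<ge> 0")
  case True
  have "0 \<le> a * exp (- c * y) + b * y" using assms True by (intro add_nonneg_nonneg) auto
  moreover have "- ((b/c)^2 / a) \<le> 0" using assms by auto
  ultimately show ?thesis by linarith
next
  case False
  define u where "u = - c * y"
  have u: "u \<ge> 0" using False assms by (simp add: u_def mult_nonneg_nonpos)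
  have y: "y = - u / c" using assms by (simp add: u_def)
  have "a * (1 + u + u^2/4) \<le> a * exp u" using exp_quad[OF u] assms by simp
  moreover have "a * (u^2/4) - (b/c) * u \<ge> - ((b/c)^2 / a)"
  proof -
    have "0 \<le> (a/2 * u - b/c)^2 / a" using assms by simp
    also have "(a/2 * u - b/c)^2 / a = a * (u^2/4) - (b/c) * u + (b/c)^2/a"
      using assms by (simp add: power2_eq_square field_simps)
    finally show ?thesis by linarith
  qed
  moreover have "b * y = - (b/c) * u" using y by simp
  moreover have "a * exp (- c * y) = a * exp u" by (simp add: u_def)
  moreover have "0 \<le> a * (1 + u)" using u assms by simp
  moreover have "a*(1+u+u^2/4) = a*(1+u) + a*(u^2/4)" by (simp add: algebra_simps)
  ultimately show ?thesis by linarith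
qed

lemma scal_bound:
  fixes a b c M :: real assumes "a > 0" "b > 0" "c > 0"
  shows "\<exists>R>0. \<forall>y. a * exp (- c * y) + b * y \<le> M \<longrightarrow> \<bar>y\<bar> < R"
proof -
  define R where "R = \<bar>M\<bar>/b + (1 + 4*(\<bar>M\<bar> + b/c)/a)/c + 1"
  have Rpos: "R > 0" using assms unfolding R_def by (intro add_nonneg_pos add_nonneg_nonneg) auto
  have "\<bar>y\<bar> < R" if hy: "a * exp (- c * y) + b * y \<le> M" for y
  proof (cases "y \<ge> 0")
    case True
    have "0 < a * exp (- c * y)" using assms by simp
    hence "b * y \<le> M" using hy by linarith
    hence "y \<le> \<bar>M\<bar> / b" using assms by (simp add: field_simps)
    moreover have "(1 + 4*(\<bar>M\<bar> + b/c)/a)/c \<ge> 0" using assms by simp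
    ultimately show ?thesis using True unfolding R_def by simp
  next
    case False
    define u where "u = - c * y"
    have u: "u \<ge> 0" using False assms by (simp add: u_def mult_nonneg_nonpos)
    have y: "y = - u / c" using assms by (simp add: u_def)
    have e: "a * (1 + u + u^2/4) \<le> a * exp u" using exp_quad[OF u] assms by simp
    have by': "b * y = - (b/c) * u" using y by simp
    have ee: "a * exp (- c * y) = a * exp u" by (simp add: u_def)
    have "0 \<le> a * (1 + u)" using u assms by simp
    have "a*(1+u+u^2/4) = a*(1+u) + a*(u^2/4)" by (simp add: algebra_simps)
    hence "a * (u^2/4) \<le> M + (b/c) * u"
      using hy e by' ee \<open>0 \<le> a * (1 + u)\<close> by linarith
    have ub: "u \<le> 1 + 4*(\<bar>M\<bar> + b/c)/a"
    proof (cases "u \<le> 1")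
      case True
      have "0 \<le> 4*(\<bar>M\<bar> + b/c)/a" using assms by simp
      thus ?thesis using True by linarith
    next
      case False
      hence "a * (u^2/4) \<le> \<bar>M\<bar> * u + (b/c) * u"
        using \<open>a * (u^2/4) \<le> M + (b/c) * u\<close> mult_left_mono[of 1 u "\<bar>M\<bar>"] False abs_ge_self[of M]
        by simp
      hence "(a * u/4) * u \<le> (\<bar>M\<bar> + b/c) * u" by (simp add: power2_eq_square algebra_simps)
      hence "a * u / 4 \<le> \<bar>M\<bar> + b/c" using False by simp
      hence "u \<le> 4*(\<bar>M\<bar> + b/c)/a" using assms by (simp add: field_simps)
      thus ?thesis by simp
    qed
    have "\<bar>y\<bar> = u / c" using y u assms by simp
    also have "\<dots> \<le> (1 + 4*(\<bar>M\<bar> + b/c)/a)/c" using ub assms by (simp add: divide_right_mono)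
    also have "\<dots> < R" unfolding R_def using assms by (simp add: add_strict_increasing2)
    finally show ?thesis .
  qed
  thus ?thesis using Rpos by blast
qed


lemma piX_add: "piX X (a + b) = piX X a + piX X b"
  by (simp add: piX_def scaleR_add_left sum.distrib)
lemma piX_scale: "piX X (r *\<^sub>R a) = r *\<^sub>R piX X a"
  by (simp add: piX_def scaleR_sum_right)
lemma piX_zero: "piX X 0 = 0"
  by (simp add: piX_def)
lemma piX_diff: "piX X (a - b) = piX X a - piX X b"
  by (simp add: piX_def scaleR_diff_left sum_subtractf)

lemma nker_subspace: "subspace (nker X)"
  unfolding subspace_def nker_def by (auto simp: piX_add piX_scale piX_zero)

lemma inner_piX: "\<xi> \<bullet> piX X w = (\<Sum>j\<in>UNIV. w$j * (\<xi> \<bullet> X j))"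
  by (simp add: piX_def inner_sum_right)

lemma inner_vec_real: "(v::real^'d::finite) \<bullet> w = (\<Sum>j\<in>UNIV. v$j * w$j)"
  by (simp add: inner_vec_def)

lemma row_space:
  fixes X :: "'d::finite \<Rightarrow> real^'n::finite" and q :: "real^'d"
  assumes "\<forall>W\<in>nker X. q \<bullet> W = 0"
  shows "\<exists>\<xi>. \<forall>j. \<xi> \<bullet> X j = q$j"
proof -
  define S where "S = range (\<lambda>\<xi>. (\<chi> j. \<xi> \<bullet> X j) :: real^'d)"
  have sub: "subspace S"
    unfolding subspace_def S_def
  proof (intro conjI ballI allI)
    show "0 \<in> range (\<lambda>\<xi>. (\<chi> j. \<xi> \<bullet> X j) :: real^'d)"
      by (rule range_eqI[of _ _ 0]) (simp add: vec_eq_iff)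
  next
    fix x y assume "x \<in> range (\<lambda>\<xi>. (\<chi> j. \<xi> \<bullet> X j) :: real^'d)"
      "y \<in> range (\<lambda>\<xi>. (\<chi> j. \<xi> \<bullet> X j) :: real^'d)"
    then obtain a b where "x = (\<chi> j. a \<bullet> X j)" "y = (\<chi> j. b \<bullet> X j)" by auto
    thus "x + y \<in> range (\<lambda>\<xi>. (\<chi> j. \<xi> \<bullet> X j) :: real^'d)"
      by (intro range_eqI[of _ _ "a+b"]) (simp add: vec_eq_iff inner_add_left)
  next
    fix c :: real and x assume "x \<in> range (\<lambda>\<xi>. (\<chi> j. \<xi> \<bullet> X j) :: real^'d)"
    then obtain a where "x = (\<chi> j. a \<bullet> X j)" by auto
    thus "c *\<^sub>R x \<in> range (\<lambda>\<xi>. (\<chi> j. \<xi> \<bullet> X j) :: real^'d)"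
      by (intro range_eqI[of _ _ "c *\<^sub>R a"]) (simp add: vec_eq_iff)
  qed
  obtain y w where y: "y \<in> span S" and w: "\<And>v. v \<in> span S \<Longrightarrow> orthogonal w v" and q: "q = y + w"
    using orthogonal_subspace_decomp_exists[of S q] by metis
  have spanS: "span S = S" using sub by simp
  have "w \<bullet> (\<chi> j. \<xi> \<bullet> X j) = 0" for \<xi>
    using w[of "\<chi> j. \<xi> \<bullet> X j"] spanS unfolding S_def orthogonal_def by auto
  hence "(\<Sum>j\<in>UNIV. w$j * (\<xi> \<bullet> X j)) = 0" for \<xi>
    by (simp add: inner_vec_real)
  hence "\<xi> \<bullet> piX X w = 0" for \<xi> by (simp add: inner_piX)
  hence "piX X w = 0" by (metis inner_eq_zero_iff)
  hence "w \<in> nker X" by (simp add: nker_def)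
  hence "q \<bullet> w = 0" using assms by auto
  moreover have "y \<bullet> w = 0" using w[OF y] by (simp add: orthogonal_def inner_commute)
  ultimately have "w \<bullet> w = 0" using q by (simp add: inner_add_left)
  hence "w = 0" by simp
  with y q spanS obtain \<xi> where "q = (\<chi> j. \<xi> \<bullet> X j)" unfolding S_def by auto
  thus ?thesis by auto
qed


lemma Aact_nth: "Aact Y z $ j = complex_of_real (exp (- 2 * pi * (Y $ j))) * (z $ j)"
  by (simp add: Aact_def)

lemma cmod_Aact: "(cmod (Aact Y z $ j))\<^sup>2 = (cmod (z$j))\<^sup>2 * exp (- (4*pi) * Y$j)"
proof -
  have "cmod (Aact Y z $ j) = exp (- 2 * pi * (Y $ j)) * cmod (z$j)"
    by (simp add: Aact_nth norm_mult)
  hence "(cmod (Aact Y z $ j))\<^sup>2 = (exp (- 2 * pi * (Y $ j)))\<^sup>2 * (cmod (z$j))\<^sup>2"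
    by (simp add: power_mult_distrib)
  also have "(exp (- 2 * pi * (Y $ j)))\<^sup>2 = exp (2 * (- 2 * pi * (Y $ j)))"
    by (rule exp_double[symmetric])
  also have "2 * (- 2 * pi * (Y $ j)) = - (4*pi) * Y$j" by simp
  finally show ?thesis by simp
qed

lemma orbit_unique:
  assumes Y1: "Y1 \<in> nker X" and Y2: "Y2 \<in> nker X"
    and P1: "Aact Y1 z \<in> Psi_zero X lam" and P2: "Aact Y2 z \<in> Psi_zero X lam"
  shows "Aact Y1 z = Aact Y2 z"
proof -
  define W where "W = Y1 - Y2"
  have W: "W \<in> nker X" using Y1 Y2 unfolding W_def nker_def by (simp add: piX_diff)
  define A where "A j = (cmod (z$j))\<^sup>2" for j
  define e1 where "e1 j = exp (- (4*pi) * Y1$j)" for j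
  define e2 where "e2 j = exp (- (4*pi) * Y2$j)" for j
  define t where "t j = A j * (e2 j - e1 j) * W$j" for j
  have "Psi lam (Aact Y1 z) W = 0" "Psi lam (Aact Y2 z) W = 0"
    using P1 P2 W unfolding Psi_zero_def by auto
  hence "(\<Sum>j\<in>UNIV. (A j * e1 j + lam j) * W$j) - (\<Sum>j\<in>UNIV. (A j * e2 j + lam j) * W$j) = 0"
    unfolding Psi_def cmod_Aact A_def e1_def e2_def by simp
  hence "(\<Sum>j\<in>UNIV. (A j * e1 j + lam j) * W$j - (A j * e2 j + lam j) * W$j) = 0"
    by (simp add: sum_subtractf)
  moreover have "(A j * e1 j + lam j) * W$j - (A j * e2 j + lam j) * W$j = - t j" for j
    unfolding t_def by (simp add: algebra_simps)
  ultimately have s0: "(\<Sum>j\<in>UNIV. t j) = 0" by (simp add: sum_negf)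
  have tnn: "t j \<ge> 0" for j
  proof (cases "W$j \<ge> 0")
    case True
    hence "Y2$j \<le> Y1$j" by (simp add: W_def)
    hence "e1 j \<le> e2 j" unfolding e1_def e2_def by simp
    thus ?thesis using True unfolding t_def A_def by simp
  next
    case False
    hence "Y1$j \<le> Y2$j" by (simp add: W_def)
    hence "e2 j \<le> e1 j" unfolding e1_def e2_def by simp
    hence "(e2 j - e1 j) * W$j \<ge> 0" using False by (simp add: mult_nonpos_nonpos)
    thus ?thesis unfolding t_def A_def by (simp add: mult.assoc)
  qed
  have t0: "t j = 0" for j using s0 tnn sum_nonneg_eq_0_iff[of UNIV t] by auto
  show ?thesis
  proof (subst vec_eq_iff, intro allI)
    fix j
    show "Aact Y1 z $ j = Aact Y2 z $ j"
    proof (cases "z$j = 0")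
      case True thus ?thesis by (simp add: Aact_nth)
    next
      case False
      hence "A j \<noteq> 0" by (simp add: A_def)
      hence "(e2 j - e1 j) * W$j = 0" using t0[of j] unfolding t_def by simp
      hence "Y1$j = Y2$j" unfolding e1_def e2_def W_def by auto
      thus ?thesis by (simp add: Aact_nth)
    qed
  qed
qed


lemma min_deriv0:
  fixes g :: "real \<Rightarrow> real"
  assumes "(g has_field_derivative Dv) (at 0)" "\<And>t. g 0 \<le> g t"
  shows "Dv = 0"
proof -
  have "\<forall>y. \<bar>0 - y\<bar> < 1 \<longrightarrow> g 0 \<le> g y" using assms(2) by auto
  from DERIV_local_min[OF assms(1) zero_less_one this] show ?thesis .
qed

lemma exists_zero:
  fixes X :: "'d::finite \<Rightarrow> real^'n::finite" and lam :: "'d \<Rightarrow> real"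
    and I :: "'d set" and z :: "complex^'d"
  assumes xi0: "\<xi>0 \<in> faceI X lam I" and zI: "z \<in> Cstar_Fc I"
  shows "\<exists>Y1\<in>nker X. Aact Y1 z \<in> Psi_zero X lam"
proof -
  define sl where "sl j = \<xi>0 \<bullet> X j - lam j" for j
  define A where "A j = (cmod (z$j))\<^sup>2" for j
  have s_nn: "sl j \<ge> 0" for j using xi0 unfolding faceI_def Delta_def sl_def by auto
  have s_I: "sl j = 0 \<longleftrightarrow> j \<in> I" for j using xi0 unfolding faceI_def sl_def by auto
  have A_I: "A j = 0 \<longleftrightarrow> j \<in> I" for j using zI unfolding Cstar_Fc_def A_def by auto
  have s_pos: "j \<notin> I \<Longrightarrow> sl j > 0" for j using s_nn s_I by (metis less_eq_real_def)
  have A_pos: "j \<notin> I \<Longrightarrow> A j > 0" for j using A_I unfolding A_def by auto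
  define f where "f j y = A j * exp (- (4*pi) * y) + (4*pi * sl j) * y" for j y
  define H where "H v = (\<Sum>j\<in>UNIV. f j (v$j))" for v :: "real^'d"
  define P where "P Y = (\<chi> j. if j \<in> I then 0 else Y$j)" for Y :: "real^'d"
  have fI: "j \<in> I \<Longrightarrow> f j y = 0" for j y
  proof -
    assume "j \<in> I"
    hence "A j = 0" "sl j = 0" using A_I s_I by auto
    thus ?thesis unfolding f_def by simp
  qed
  have HP: "H (P v) = H v" for v
    unfolding H_def by (rule sum.cong) (auto simp: P_def fI)
  define V where "V = P ` nker X"
  have P_add: "P (a + b) = P a + P b" for a b by (simp add: P_def vec_eq_iff)
  have P_scale: "P (r *\<^sub>R a) = r *\<^sub>R P a" for r a by (simp add: P_def vec_eq_iff)
  have P0: "P 0 = 0" by (simp add: P_def vec_eq_iff)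
  have nk: "subspace (nker X)" by (rule nker_subspace)
  have subV: "subspace V"
    unfolding subspace_def V_def
  proof (intro conjI ballI allI)
    show "0 \<in> P ` nker X" using P0 nk by (metis image_eqI subspace_0)
  next
    fix x y assume "x \<in> P ` nker X" "y \<in> P ` nker X"
    then obtain a b where "a \<in> nker X" "b \<in> nker X" "x = P a" "y = P b" by auto
    thus "x + y \<in> P ` nker X" using P_add nk by (metis image_eqI subspace_add)
  next
    fix c :: real and x assume "x \<in> P ` nker X"
    then obtain a where "a \<in> nker X" "x = P a" by auto
    thus "c *\<^sub>R x \<in> P ` nker X" using P_scale nk by (metis image_eqI subspace_scale)
  qed
  have clV: "closed V" by (rule closed_subspace[OF subV])
  have V_I: "v \<in> V \<Longrightarrow> j \<in> I \<Longrightarrow> v$j = 0" for v j unfolding V_def P_def by auto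
  define Lb where "Lb j = (if j \<in> I then 0 else - ((4*pi * sl j/(4*pi))^2 / A j))" for j
  have Lb_le: "Lb j \<le> f j y" for j y
  proof (cases "j \<in> I")
    case True thus ?thesis by (simp add: Lb_def fI)
  next
    case False
    show ?thesis using scal_lower[of "A j" "4*pi * sl j" "4*pi" y] A_pos[OF False] s_pos[OF False]
      unfolding Lb_def f_def using False by simp
  qed
  have Lb_np: "Lb j \<le> 0" for j unfolding Lb_def using A_pos by (auto intro!: divide_nonneg_pos)
  define M where "M = H 0 - (\<Sum>j\<in>UNIV. Lb j)"
  have "\<forall>j. \<exists>R. j \<notin> I \<longrightarrow> (R > 0 \<and> (\<forall>y. f j y \<le> M \<longrightarrow> \<bar>y\<bar> < R))"
  proof
    fix j show "\<exists>R. j \<notin> I \<longrightarrow> (R > 0 \<and> (\<forall>y. f j y \<le> M \<longrightarrow> \<bar>y\<bar> < R))"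
    proof (cases "j \<in> I")
      case True thus ?thesis by auto
    next
      case False
      from scal_bound[of "A j" "4*pi * sl j" "4*pi" M] A_pos[OF False] s_pos[OF False]
      show ?thesis unfolding f_def by auto
    qed
  qed
  then obtain Rf where Rf: "\<forall>j. j \<notin> I \<longrightarrow> (Rf j > 0 \<and> (\<forall>y. f j y \<le> M \<longrightarrow> \<bar>y\<bar> < Rf j))"
    using choice[of "\<lambda>j R. j \<notin> I \<longrightarrow> (R > 0 \<and> (\<forall>y. f j y \<le> M \<longrightarrow> \<bar>y\<bar> < R))"] by blast
  define Rt where "Rt = (\<Sum>j\<in>UNIV. if j \<in> I then 0 else Rf j)"
  have Rt_nn: "Rt \<ge> 0" unfolding Rt_def using Rf by (intro sum_nonneg) (auto simp: less_imp_le)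
  have bnd: "norm v \<le> Rt" if v: "v \<in> V" and Hv: "H v \<le> H 0" for v
  proof -
    have cj: "\<bar>v$j\<bar> \<le> (if j \<in> I then 0 else Rf j)" for j
    proof (cases "j \<in> I")
      case True thus ?thesis using V_I[OF v] by simp
    next
      case False
      have "f j (v$j) - Lb j \<le> (\<Sum>k\<in>UNIV. f k (v$k) - Lb k)"
        by (rule member_le_sum) (auto simp: Lb_le)
      also have "\<dots> = H v - (\<Sum>k\<in>UNIV. Lb k)" unfolding H_def by (simp add: sum_subtractf)
      finally have "f j (v$j) \<le> M" unfolding M_def using Hv Lb_np[of j] by linarith
      thus ?thesis using Rf False by fastforce
    qed
    have "norm v \<le> (\<Sum>j\<in>UNIV. \<bar>v$j\<bar>)" by (rule norm_le_l1_cart)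
    also have "\<dots> \<le> Rt" unfolding Rt_def by (rule sum_mono) (use cj in auto)
    finally show ?thesis .
  qed
  define K where "K = cball 0 Rt \<inter> V"
  have cK: "compact K" unfolding K_def by (intro compact_Int_closed clV) simp
  have zV: "0 \<in> V" using subV by (rule subspace_0)
  have zK: "0 \<in> K" unfolding K_def using zV Rt_nn by simp
  have contH: "continuous_on K H" unfolding H_def f_def by (intro continuous_intros)
  obtain v0 where v0K: "v0 \<in> K" and v0min: "\<forall>v\<in>K. H v0 \<le> H v"
    using continuous_attains_inf[OF cK _ contH] zK by blast
  have v0glob: "H v0 \<le> H v" if "v \<in> V" for v
  proof (cases "norm v \<le> Rt")
    case True thus ?thesis using v0min that unfolding K_def by auto
  next
    case False
    hence "H v > H 0" using bnd[OF that] by force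
    moreover have "H v0 \<le> H 0" using v0min zK by auto
    ultimately show ?thesis by simp
  qed
  obtain Y1 where Y1: "Y1 \<in> nker X" and v0: "v0 = P Y1" using v0K unfolding K_def V_def by auto
  have FOC: "(\<Sum>j\<in>UNIV. (A j * exp (- (4*pi) * Y1$j) - sl j) * W$j) = 0" if W: "W \<in> nker X" for W
  proof -
    define g where "g t = (\<Sum>j\<in>UNIV. A j * exp (- (4*pi) * (Y1$j + t * W$j)) + (4*pi * sl j) * (Y1$j + t * W$j))" for t
    have gH: "g t = H (Y1 + t *\<^sub>R W)" for t unfolding g_def H_def f_def by simp
    have gmin: "g 0 \<le> g t" for t
    proof -
      have "Y1 + t *\<^sub>R W \<in> nker X" using Y1 W nk by (metis subspace_add subspace_scale)
      hence "P (Y1 + t *\<^sub>R W) \<in> V" unfolding V_def by auto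
      hence "H v0 \<le> H (P (Y1 + t *\<^sub>R W))" by (rule v0glob)
      thus ?thesis using gH[of 0] gH[of t] HP v0 by simp
    qed
    define Dv where "Dv = (\<Sum>j\<in>UNIV. A j * (exp (- (4*pi) * (Y1$j + 0 * W$j)) * (- (4*pi) * W$j)) + (4*pi * sl j) * W$j)"
    have "(g has_field_derivative Dv) (at 0)"
      unfolding g_def Dv_def
      apply (auto intro!: derivative_eq_intros)
      apply (rule sum.cong)
       apply (simp_all add: algebra_simps)
      done
    note dd = this
    have "Dv = 0" by (rule min_deriv0[OF dd gmin])
    moreover have "Dv = - (4*pi) * (\<Sum>j\<in>UNIV. (A j * exp (- (4*pi) * Y1$j) - sl j) * W$j)"
      unfolding Dv_def sum_distrib_left by (rule sum.cong) (simp_all add: algebra_simps)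
    ultimately show ?thesis by simp
  qed
  have "Aact Y1 z \<in> Psi_zero X lam"
    unfolding Psi_zero_def
  proof (intro CollectI ballI)
    fix W assume W: "W \<in> nker X"
    have "Psi lam (Aact Y1 z) W = (\<Sum>j\<in>UNIV. (A j * exp (- (4*pi) * Y1$j) - sl j) * W$j + W$j * (\<xi>0 \<bullet> X j))"
      unfolding Psi_def cmod_Aact A_def sl_def by (rule sum.cong) (auto simp: algebra_simps)
    also have "\<dots> = (\<Sum>j\<in>UNIV. (A j * exp (- (4*pi) * Y1$j) - sl j) * W$j) + \<xi>0 \<bullet> piX X W"
      by (simp add: sum.distrib inner_piX)
    also have "\<dots> = 0" using FOC[OF W] W by (simp add: nker_def)
    finally show "Psi lam (Aact Y1 z) W = 0" .
  qed
  thus ?thesis using Y1 by blast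
qed


theorem mainTheorem11:
  fixes X :: "'d::finite \<Rightarrow> real^'n::finite" and lam :: "'d \<Rightarrow> real"
    and I :: "'d set" and F :: "(real^'n) set" and z :: "complex^'d"
  assumes "polytope (Delta X lam)"
    and "aff_dim (Delta X lam) = int CARD('n)"
    and "\<forall>j. facetj X lam j facet_of Delta X lam"
    and "inj (facetj X lam)"
    and "{G. G facet_of Delta X lam} = range (facetj X lam)"
    and "F = faceI X lam I" and "F \<noteq> {}"
    and "z \<in> Cstar_Fc I"
  shows "\<exists>!p. case p of (x, \<xi>, Y) \<Rightarrow>
            x \<in> Psi_zero X lam \<and> \<xi> \<in> F \<and> Y \<in> rperp X I \<and>
            Aorbit X z \<inter> Psi_zero X lam = {x} \<and> Aact Y z = x \<and>
            (\<forall>j. \<xi> \<bullet> X j - lam j = (cmod (x $ j))\<^sup>2)"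
proof -
  note poly = assms(1) and FI = assms(6) and Fne = assms(7) and zI = assms(8)
  have zI': "z$j = 0 \<longleftrightarrow> j \<in> I" for j using zI unfolding Cstar_Fc_def by auto
  obtain \<xi>0 where xi0: "\<xi>0 \<in> faceI X lam I" using Fne FI by auto
  obtain Y1 where Y1: "Y1 \<in> nker X" and xP: "Aact Y1 z \<in> Psi_zero X lam"
    using exists_zero[OF xi0 zI] by blast
  define x where "x = Aact Y1 z"
  have nk: "subspace (nker X)" by (rule nker_subspace)
  have orb: "Aorbit X z \<inter> Psi_zero X lam = {x}"
  proof
    show "{x} \<subseteq> Aorbit X z \<inter> Psi_zero X lam"
      using Y1 xP unfolding x_def Aorbit_def by auto
    show "Aorbit X z \<inter> Psi_zero X lam \<subseteq> {x}"
    proof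
      fix y assume "y \<in> Aorbit X z \<inter> Psi_zero X lam"
      then obtain Y2 where Y2: "Y2 \<in> nker X" "y = Aact Y2 z" "Aact Y2 z \<in> Psi_zero X lam"
        unfolding Aorbit_def by auto
      show "y \<in> {x}" using orbit_unique[OF Y1 Y2(1) xP Y2(3)] Y2(2) unfolding x_def by simp
    qed
  qed
  define q where "q = (\<chi> j. (cmod (x$j))\<^sup>2 + lam j)"
  have "\<forall>W\<in>nker X. q \<bullet> W = 0"
  proof
    fix W assume "W \<in> nker X"
    hence "Psi lam x W = 0" using xP unfolding x_def[symmetric] Psi_zero_def by auto
    thus "q \<bullet> W = 0" unfolding q_def inner_vec_real Psi_def by simp
  qed
  from row_space[OF this] obtain \<xi> where xi: "\<forall>j. \<xi> \<bullet> X j = q$j" by blast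
  have xi': "\<xi> \<bullet> X j - lam j = (cmod (x$j))\<^sup>2" for j using xi unfolding q_def by simp
  have x0: "x$j = 0 \<longleftrightarrow> j \<in> I" for j unfolding x_def Aact_nth using zI' by simp
  have xiF: "\<xi> \<in> F"
    unfolding FI faceI_def Delta_def
  proof (intro CollectI conjI allI)
    fix j
    show "lam j \<le> \<xi> \<bullet> X j" using xi'[of j] by (smt (verit) zero_le_power2)
    show "\<xi> \<bullet> X j = lam j \<longleftrightarrow> j \<in> I" using xi'[of j] x0[of j] by auto
  qed
  define S where "S = nker X \<inter> coord_sub I"
  have subS: "subspace S" unfolding S_def
    by (intro subspace_inter nk) (auto simp: subspace_def coord_sub_def)
  obtain y w where y: "y \<in> span S" and w: "\<And>v. v \<in> span S \<Longrightarrow> orthogonal w v" and Yd: "Y1 = y + w"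
    using orthogonal_subspace_decomp_exists[of S Y1] by metis
  have spanS: "span S = S" using subS by simp
  define Y where "Y = w"
  have yS: "y \<in> S" using y spanS by simp
  have YN: "Y \<in> nker X"
  proof -
    have "Y = Y1 - y" using Yd unfolding Y_def by simp
    thus ?thesis using Y1 yS nk unfolding S_def by (metis IntD1 subspace_diff)
  qed
  have Yr: "Y \<in> rperp X I"
    unfolding rperp_def using YN w spanS unfolding Y_def S_def orthogonal_def by auto
  have YA: "Aact Y z = x"
    unfolding x_def
  proof (subst vec_eq_iff, intro allI)
    fix j show "Aact Y z $ j = Aact Y1 z $ j"
    proof (cases "j \<in> I")
      case True thus ?thesis using zI' by (simp add: Aact_nth)
    next
      case False
      hence "y$j = 0" using yS unfolding S_def coord_sub_def by auto
      hence "Y$j = Y1$j" using Yd unfolding Y_def by simp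
      thus ?thesis by (simp add: Aact_nth)
    qed
  qed
  obtain B where B: "\<forall>p\<in>Delta X lam. norm p \<le> B"
    using polytope_imp_bounded[OF poly] unfolding bounded_iff by blast
  have xiDelta: "\<xi> \<in> Delta X lam" using xiF FI unfolding faceI_def by auto
  show ?thesis
  proof (rule ex1I[of _ "(x, \<xi>, Y)"])
    show "case (x, \<xi>, Y) of (x, \<xi>, Y) \<Rightarrow>
            x \<in> Psi_zero X lam \<and> \<xi> \<in> F \<and> Y \<in> rperp X I \<and>
            Aorbit X z \<inter> Psi_zero X lam = {x} \<and> Aact Y z = x \<and>
            (\<forall>j. \<xi> \<bullet> X j - lam j = (cmod (x $ j))\<^sup>2)"
      using xP xiF Yr orb YA xi' unfolding x_def[symmetric] by simp
  next
    fix p assume hp: "case p of (x, \<xi>, Y) \<Rightarrow>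
            x \<in> Psi_zero X lam \<and> \<xi> \<in> F \<and> Y \<in> rperp X I \<and>
            Aorbit X z \<inter> Psi_zero X lam = {x} \<and> Aact Y z = x \<and>
            (\<forall>j. \<xi> \<bullet> X j - lam j = (cmod (x $ j))\<^sup>2)"
    obtain x' \<xi>' Y' where p: "p = (x', \<xi>', Y')" by (cases p) auto
    from hp p have h1: "\<xi>' \<in> F" and h2: "Y' \<in> rperp X I" and h3: "Aorbit X z \<inter> Psi_zero X lam = {x'}"
      and h4: "Aact Y' z = x'" and h5: "\<forall>j. \<xi>' \<bullet> X j - lam j = (cmod (x' $ j))\<^sup>2" by auto
    have xx: "x' = x" using h3 orb by auto
    have "\<xi>' = \<xi>"
    proof (rule ccontr)
      assume ne: "\<xi>' \<noteq> \<xi>"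
      define d where "d = \<xi>' - \<xi>"
      have dn: "norm d > 0" using ne unfolding d_def by simp
      have dX: "d \<bullet> X j = 0" for j
      proof -
        have "\<xi>' \<bullet> X j - lam j = \<xi> \<bullet> X j - lam j" using h5 xi'[of j] xx by simp
        thus ?thesis unfolding d_def by (simp add: inner_diff_left)
      qed
      define t where "t = (B + norm \<xi> + 1) / norm d"
      have "\<xi> + t *\<^sub>R d \<in> Delta X lam"
        using xiDelta dX unfolding Delta_def by (simp add: inner_add_left)
      hence nb: "norm (\<xi> + t *\<^sub>R d) \<le> B" using B by auto
      have "norm (t *\<^sub>R d) \<le> norm (\<xi> + t *\<^sub>R d) + norm \<xi>"
        using norm_triangle_ineq4[of "\<xi> + t *\<^sub>R d" \<xi>] by simp
      moreover have "norm (t *\<^sub>R d) = B + norm \<xi> + 1"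
      proof -
        have "B \<ge> 0" using B xiDelta by (meson norm_ge_zero order_trans)
        hence "t \<ge> 0" unfolding t_def using dn by simp
        hence "norm (t *\<^sub>R d) = t * norm d" by simp
        thus ?thesis unfolding t_def using dn by simp
      qed
      ultimately show False using nb by simp
    qed
    moreover have "Y' = Y"
    proof -
      define W where "W = Y' - Y"
      have Y'N: "Y' \<in> nker X" using h2 unfolding rperp_def by auto
      have WN: "W \<in> nker X" unfolding W_def by (rule subspace_diff[OF nk Y'N YN])
      have "W$j = 0" if "j \<notin> I" for j
      proof -
        have "Aact Y' z $ j = Aact Y z $ j" using h4 YA xx by simp
        moreover have "z$j \<noteq> 0" using zI' that by simp
        ultimately have "exp (- 2 * pi * (Y' $ j)) = exp (- 2 * pi * (Y $ j))"
          unfolding Aact_nth by simp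
        thus ?thesis unfolding W_def by simp
      qed
      hence WS: "W \<in> nker X \<inter> coord_sub I" using WN unfolding coord_sub_def by auto
      have "Y' \<bullet> W = 0" "Y \<bullet> W = 0" using h2 Yr WS unfolding rperp_def by auto
      hence "W \<bullet> W = 0" unfolding W_def by (simp add: inner_diff_left)
      thus ?thesis unfolding W_def by simp
    qed
    ultimately show "p = (x, \<xi>, Y)" using p xx by simp
  qed
qed

end
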